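(* For any integer $m\ge0$, both $\{E_n(x)^{q^m}\}_{n\ge0}$ and $\{\mathcal{D}_n(x)^{q^m}\}_{n\ge0}$ are orthonormal bases of $LC(O,K)$.
   Context: Let $q$ be a prime power, $K=\mathbf{F}_q((T))$, $O=\mathbf{F}_q[[T]]$ with $T$-adic absolute value. $LC(O,K)$ is the $K$-Banach space of continuous $\mathbf{F}_q$-linear functions $O\to K$ with sup-norm; a sequence $(f_n)$ is an orthonormal basis if every $f$ can be written uniquely as $f=\sum a_nf_n$ with $a_n\in K$, $a_n\to0$, and then $\|f\|=\max|a_n|$. For $n\ge1$: $[n]=T^{q^n}-T$, $F_0=1$, $F_n=[n][n-1]^q\cdots[1]^{q^{n-1}}$, $e_n(x)=\prod_{m\in\mathbf{F}_q[T],\deg m<n}(x-m)$; $E_0(x)=x$, $E_n=e_n/F_n$. Hasse derivatives: $\mathcal{D}_n(\sum_ia_iT^i)=\sum_i\binom{i}{n}a_iT^{i-n}$ (binomials in $\mathbf{F}_q$). *)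

theory Defs
  imports "HOL-Analysis.Analysis" "HOL-Computational_Algebra.Formal_Laurent_Series"
begin

text \<open>Setting: F_q is a finite field type 'a, q = CARD('a).
  K = F_q((T)) is the type 'a fls, O = F_q[[T]] is the type 'a fps,
  embedded into K via fps_to_fls.\<close>

definition tabs :: "'a::{field,finite} fls \<Rightarrow> real" where
  "tabs a = (if a = 0 then 0 else real CARD('a) powi (- fls_subdegree a))"

definition tcont :: "('a::{field,finite} fps \<Rightarrow> 'a fls) \<Rightarrow> bool" where
  "tcont f \<longleftrightarrow> (\<forall>x. \<forall>e>0. \<exists>d>0. \<forall>y.
      tabs (fps_to_fls y - fps_to_fls x) < d \<longrightarrow> tabs (f y - f x) < e)"

definition fq_linear :: "('a::{field,finite} fps \<Rightarrow> 'a fls) \<Rightarrow> bool" where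
  "fq_linear f \<longleftrightarrow> (\<forall>c d x y. f (fps_const c * x + fps_const d * y)
                        = fls_const c * f x + fls_const d * f y)"

definition LC :: "('a::{field,finite} fps \<Rightarrow> 'a fls) set" where
  "LC = {f. fq_linear f \<and> tcont f}"

definition supnorm :: "('a::{field,finite} fps \<Rightarrow> 'a fls) \<Rightarrow> real" where
  "supnorm f = (SUP x. tabs (f x))"

definition series_to :: "(nat \<Rightarrow> 'a::{field,finite} fls) \<Rightarrow> (nat \<Rightarrow> 'a fps \<Rightarrow> 'a fls)
    \<Rightarrow> ('a fps \<Rightarrow> 'a fls) \<Rightarrow> bool" where
  "series_to a b f \<longleftrightarrow>
     (\<lambda>N. supnorm (\<lambda>x. f x - (\<Sum>n<N. a n * b n x))) \<longlonglongrightarrow> 0"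

definition null_seq :: "(nat \<Rightarrow> 'a::{field,finite} fls) \<Rightarrow> bool" where
  "null_seq a \<longleftrightarrow> (\<lambda>n. tabs (a n)) \<longlonglongrightarrow> 0"

definition orthonormal_basis :: "(nat \<Rightarrow> 'a::{field,finite} fps \<Rightarrow> 'a fls) \<Rightarrow> bool" where
  "orthonormal_basis b \<longleftrightarrow>
     (\<forall>n. b n \<in> LC) \<and>
     (\<forall>f\<in>LC. \<exists>!a. null_seq a \<and> series_to a b f) \<and>
     (\<forall>f\<in>LC. \<forall>a. null_seq a \<and> series_to a b f \<longrightarrow>
        (\<exists>n. tabs (a n) = supnorm f) \<and> (\<forall>n. tabs (a n) \<le> supnorm f))"

definition bracket :: "'a::{field,finite} itself \<Rightarrow> nat \<Rightarrow> 'a fls" where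
  "bracket _ i = fls_X ^ (CARD('a) ^ i) - fls_X"

definition carlitzF :: "'a::{field,finite} itself \<Rightarrow> nat \<Rightarrow> 'a fls" where
  "carlitzF t n = (\<Prod>i\<in>{1..n}. bracket t i ^ (CARD('a) ^ (n - i)))"

text \<open>e_n(x) = prod over m in F_q[T], deg m < n, of (x - m); polynomials of degree < n
  are identified with the power series whose coefficients vanish from index n on.\<close>
definition carlitz_e :: "nat \<Rightarrow> 'a::{field,finite} fps \<Rightarrow> 'a fls" where
  "carlitz_e n x = (\<Prod>m\<in>{m :: 'a fps. \<forall>i\<ge>n. m $ i = 0}. fps_to_fls x - fps_to_fls m)"

definition carlitzE :: "nat \<Rightarrow> 'a::{field,finite} fps \<Rightarrow> 'a fls" where
  "carlitzE n x = (if n = 0 then fps_to_fls x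
                   else carlitz_e n x / carlitzF TYPE('a) n)"

text \<open>Hasse derivative D_n(sum a_i T^i) = sum binom(i,n) a_i T^(i-n), binomials in F_q.\<close>
definition hasse :: "nat \<Rightarrow> 'a::{field,finite} fps \<Rightarrow> 'a fls" where
  "hasse n x = fps_to_fls (Abs_fps (\<lambda>j. of_nat ((j + n) choose n) * x $ (j + n)))"

end

theory Submission
  imports Defs "HOL-Computational_Algebra.Polynomial" "HOL-Computational_Algebra.Primes"
begin


lemma q_ge2: "CARD('a::{field,finite}) \<ge> 2"
proof -
  have "card {0::'a, 1} = 2" by simp
  moreover have "card {0::'a, 1} \<le> CARD('a)" by (rule card_mono) auto
  ultimately show ?thesis by simp
qed

lemma tabs_nonneg: "tabs (a::'a::{field,finite} fls) \<ge> 0"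
  unfolding tabs_def by auto

lemma tabs_0 [simp]: "tabs (0::'a::{field,finite} fls) = 0"
  unfolding tabs_def by auto

lemma tabs_eq_0_iff [simp]: "tabs (a::'a::{field,finite} fls) = 0 \<longleftrightarrow> a = 0"
  unfolding tabs_def using q_ge2[where 'a='a] by auto

lemma tabs_pos: "(a::'a::{field,finite} fls) \<noteq> 0 \<Longrightarrow> tabs a > 0"
  using tabs_nonneg[of a] tabs_eq_0_iff[of a] by linarith

lemma tabs_mult: "tabs ((a::'a::{field,finite} fls) * b) = tabs a * tabs b"
proof (cases "a = 0 \<or> b = 0")
  case False
  have q: "real CARD('a) \<noteq> 0" using q_ge2[where 'a='a] by simp
  have "real CARD('a) powi (- fls_subdegree a + - fls_subdegree b) =
     real CARD('a) powi (- fls_subdegree a) * real CARD('a) powi (- fls_subdegree b)"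
    using q by (rule power_int_add[OF disjI1])
  then show ?thesis using False unfolding tabs_def by simp
qed (auto simp: tabs_def)

lemma tabs_uminus [simp]: "tabs (- (a::'a::{field,finite} fls)) = tabs a"
  unfolding tabs_def by auto

lemma tabs_minus_commute: "tabs ((a::'a::{field,finite} fls) - b) = tabs (b - a)"
  by (metis minus_diff_eq tabs_uminus)


lemma tabs_const: "c \<noteq> 0 \<Longrightarrow> tabs (fls_const (c::'a::{field,finite})) = 1"
  unfolding tabs_def by auto

lemma tabs_one [simp]: "tabs (1::'a::{field,finite} fls) = 1"
  by (metis fls_const_1 one_neq_zero tabs_const)

lemma tabs_power: "tabs ((a::'a::{field,finite} fls) ^ n) = tabs a ^ n"
  by (induction n) (simp_all add: tabs_mult)

lemma tabs_divide: "tabs ((a::'a::{field,finite} fls) / b) = tabs a / tabs b"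
proof -
  have "tabs (inverse b) = inverse (tabs b)"
  proof (cases "b = 0")
    case False
    then have "tabs (b * inverse b) = 1" by simp
    then show ?thesis unfolding tabs_mult using False tabs_pos[of b]
      by (simp add: field_simps)
  qed simp
  then show ?thesis by (simp add: divide_inverse tabs_mult)
qed

lemma tabs_add_le: "tabs ((a::'a::{field,finite} fls) + b) \<le> max (tabs a) (tabs b)"
proof (cases "a = 0 \<or> b = 0 \<or> a + b = 0")
  case True
  then show ?thesis using tabs_nonneg[of a] tabs_nonneg[of b] by auto
next
  case False
  then have h: "fls_subdegree (a + b) \<ge> min (fls_subdegree a) (fls_subdegree b)"
    by (intro fls_plus_subdegree) auto
  have q: "real CARD('a) \<ge> 2" using q_ge2[where 'a='a] by simp
  show ?thesis
  proof (cases "fls_subdegree a \<le> fls_subdegree b")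
    case True
    then have "- fls_subdegree (a+b) \<le> - fls_subdegree a" using h by auto
    then have "real CARD('a) powi (- fls_subdegree (a+b)) \<le> real CARD('a) powi (- fls_subdegree a)"
      using q by (intro power_int_increasing) auto
    then show ?thesis using False unfolding tabs_def by auto
  next
    case F: False
    then have "- fls_subdegree (a+b) \<le> - fls_subdegree b" using h by auto
    then have "real CARD('a) powi (- fls_subdegree (a+b)) \<le> real CARD('a) powi (- fls_subdegree b)"
      using q by (intro power_int_increasing) auto
    then show ?thesis using False unfolding tabs_def by auto
  qed
qed

lemma tabs_diff_le: "tabs ((a::'a::{field,finite} fls) - b) \<le> max (tabs a) (tabs b)"
  using tabs_add_le[of a "-b"] by simp

lemma tabs_sum_le:
  assumes "\<And>i. i \<in> S \<Longrightarrow> tabs (f i) \<le> c" "c \<ge> 0"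
  shows "tabs (sum f S :: 'a::{field,finite} fls) \<le> c"
  using assms
proof (induction S rule: infinite_finite_induct)
  case (insert x F)
  then have "tabs (f x) \<le> c" "tabs (sum f F) \<le> c" by auto
  moreover have "tabs (sum f (insert x F)) \<le> max (tabs (f x)) (tabs (sum f F))"
    using tabs_add_le[of "f x" "sum f F"] insert by auto
  ultimately show ?case by linarith
qed auto

lemma tabs_sum_ex:
  assumes "finite S" "S \<noteq> {}"
  shows "\<exists>i\<in>S. tabs (sum f S :: 'a::{field,finite} fls) \<le> tabs (f i)"
  using assms
proof (induction S rule: finite_ne_induct)
  case (insert x F)
  then obtain i where i: "i \<in> F" "tabs (sum f F) \<le> tabs (f i)" by auto
  have "tabs (sum f (insert x F)) \<le> max (tabs (f x)) (tabs (sum f F))"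
    using insert tabs_add_le by auto
  show ?case
  proof (cases "tabs (f x) \<le> tabs (f i)")
    case True
    then show ?thesis using i \<open>tabs (sum f (insert x F)) \<le> _\<close> by (intro bexI[of _ i]) auto
  next
    case False
    then show ?thesis using i \<open>tabs (sum f (insert x F)) \<le> _\<close> by (intro bexI[of _ x]) auto
  qed
qed auto

lemma tabs_fps_le1: "tabs (fps_to_fls (x::'a::{field,finite} fps)) \<le> 1"
proof (cases "x = 0")
  case False
  have q: "real CARD('a) \<ge> 2" using q_ge2[where 'a='a] by simp
  have "real CARD('a) powi (- int (subdegree x)) \<le> real CARD('a) powi 0"
    using q by (intro power_int_increasing) auto
  then show ?thesis using False unfolding tabs_def by (simp add: fls_subdegree_fls_to_fps)
qed simp

lemma tabs_fps: "(x::'a::{field,finite} fps) \<noteq> 0 \<Longrightarrow>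
   tabs (fps_to_fls x) = 1 / real CARD('a) ^ subdegree x"
  unfolding tabs_def by (simp add: fls_subdegree_fls_to_fps power_int_minus inverse_eq_divide)

lemma tabs_fls_X_pow: "tabs (fls_X ^ i :: 'a::{field,finite} fls) = 1 / real CARD('a) ^ i"
  unfolding tabs_def by (simp add: power_int_minus inverse_eq_divide)

lemma tabs_lt1: "tabs (a::'a::{field,finite} fls) < 1 \<Longrightarrow> tabs a \<le> 1 / real CARD('a)"
proof (cases "a = 0")
  case False
  assume "tabs a < 1"
  have q: "real CARD('a) \<ge> 2" using q_ge2[where 'a='a] by simp
  have "\<not> fls_subdegree a \<le> 0"
  proof
    assume "fls_subdegree a \<le> 0"
    then have "real CARD('a) powi 0 \<le> real CARD('a) powi (- fls_subdegree a)"
      using q by (intro power_int_increasing) auto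
    then show False using \<open>tabs a < 1\<close> False unfolding tabs_def by auto
  qed
  then have "real CARD('a) powi (- fls_subdegree a) \<le> real CARD('a) powi (-1)"
    using q by (intro power_int_increasing) auto
  also have "real CARD('a) powi (-1) = 1 / real CARD('a)" by (simp add: power_int_minus inverse_eq_divide)
  finally show ?thesis using False unfolding tabs_def by simp
qed simp


lemma field_pow_card: "(x::'a::{field,finite}) ^ CARD('a) = x"
proof (cases "x = 0")
  case False
  have "x * (\<Prod>y\<in>UNIV-{0}. x * y) = x * x ^ (card (UNIV :: 'a set) - 1) * \<Prod>(UNIV-{0})"
    by (simp add: prod.distrib mult_ac)
  also have "x * x ^ (card (UNIV :: 'a set) - 1) = x ^ Suc (card (UNIV :: 'a set) - 1)"
    by (subst power_Suc) auto
  also have "Suc (card (UNIV :: 'a set) - 1) = card (UNIV :: 'a set)"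
    using finite_UNIV_card_ge_0[where ?'a = 'a] by simp
  also have "(\<Prod>y\<in>UNIV-{0}. x * y) = (\<Prod>y\<in>UNIV-{0}. y)"
    by (rule prod.reindex_bij_witness[of _ "\<lambda>y. y / x" "\<lambda>y. x * y"]) (use False in auto)
  finally show ?thesis
    by simp
qed (use finite_UNIV_card_ge_0[where ?'a = 'a] in auto)

lemma field_pow_card_pow: "(x::'a::{field,finite}) ^ (CARD('a) ^ n) = x"
  by (induction n) (simp_all add: field_pow_card power_mult power_Suc2 mult.commute)

lemma additive_prod:
  fixes W :: "'b::field set"
  assumes fin: "finite W" and z: "0 \<in> W" and cl: "\<And>u v. u \<in> W \<Longrightarrow> v \<in> W \<Longrightarrow> u - v \<in> W"
  shows "(\<Prod>w\<in>W. (x + y) - w) = (\<Prod>w\<in>W. x - w) + (\<Prod>w\<in>W. y - w)"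
proof -
  define P where "P = (\<Prod>w\<in>W. [:-w, 1:])"
  have polyP: "\<And>t. poly P t = (\<Prod>w\<in>W. t - w)" by (simp add: P_def poly_prod)
  have degP: "degree P = card W" unfolding P_def
    by (subst degree_prod_eq_sum_degree) auto
  have lcP: "lead_coeff P = 1" unfolding P_def by (simp add: lead_coeff_prod)
  have shift: "(\<Prod>w\<in>W. (w0 + y) - w) = (\<Prod>w\<in>W. y - w)" if "w0 \<in> W" for w0
  proof (rule prod.reindex_bij_witness[of _ "\<lambda>u. u + w0" "\<lambda>w. w - w0"])
    fix u assume "u \<in> W"
    have "u + w0 = u - (0 - w0)" by simp
    then show "u + w0 \<in> W" using cl[OF \<open>u\<in>W\<close> cl[OF z that]] by simp
  qed (use cl that in auto)
  have cW: "card W \<ge> 1" using fin z by (metis One_nat_def Suc_leI card_gt_0_iff empty_iff)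
  have "pcompose P [:y, 1:] = P + [:poly P y:]"
  proof (rule poly_eqI_degree_lead_coeff[where n = "card W" and A = W])
    have d1: "degree (pcompose P [:y, 1:]) = card W" by (simp add: degree_pcompose degP)
    have "lead_coeff (pcompose P [:y, 1:]) = 1" by (subst lead_coeff_comp) (auto simp: lcP)
    then have "poly.coeff (pcompose P [:y, 1:]) (card W) = 1" using d1 by simp
    moreover have "poly.coeff (P + [:poly P y:]) (card W) = 1"
      using lcP degP cW by (auto simp: coeff_pCons split: nat.splits)
    ultimately show "poly.coeff (pcompose P [:y, 1:]) (card W) = poly.coeff (P + [:poly P y:]) (card W)"
      by simp
    show "card W \<le> card W" by simp
    show "degree (pcompose P [:y, 1:]) \<le> card W" using d1 by simp
    show "degree (P + [:poly P y:]) \<le> card W"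
      using degree_add_le[of P "card W" "[:poly P y:]"] degP by auto
    fix t assume t: "t \<in> W"
    have "poly P t = 0" unfolding polyP using t fin by (auto intro: prod_zero)
    moreover have "poly P (t + y) = poly P y" unfolding polyP using shift[OF t] .
    ultimately show "poly (pcompose P [:y, 1:]) t = poly (P + [:poly P y:]) t"
      by (simp add: poly_pcompose add.commute)
  qed
  then have "poly (pcompose P [:y, 1:]) x = poly (P + [:poly P y:]) x" by simp
  then show ?thesis by (simp add: poly_pcompose polyP add.commute)
qed

lemma inj_fls_const: "inj (fls_const :: 'a::field \<Rightarrow> 'a fls)"
proof (rule injI)
  fix x y :: 'a assume "fls_const x = fls_const y"
  then have "fls_nth (fls_const x) 0 = fls_nth (fls_const y) 0" by simp
  then show "x = y" by simp
qed

lemma fls_const_diff: "fls_const a - fls_const b = fls_const (a - b :: 'a::ab_group_add)"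
  by (intro fls_eqI) simp

lemma prod_fls_const_UNIV:
  "(\<Prod>c\<in>(UNIV::'a::{field,finite} set). t - fls_const c) = t ^ CARD('a) - t"
proof -
  define P where "P = (\<Prod>c\<in>(UNIV::'a set). [:- fls_const c, 1:])"
  define R where "R = (monom 1 (CARD('a)) - [:0, 1:] :: 'a fls poly)"
  have q2: "CARD('a) \<ge> 2" by (rule q_ge2)
  have polyP: "\<And>t. poly P t = (\<Prod>c\<in>UNIV. t - fls_const c)" by (simp add: P_def poly_prod)
  have degP: "degree P = CARD('a)" unfolding P_def
    by (subst degree_prod_eq_sum_degree) auto
  have lcP: "lead_coeff P = 1" unfolding P_def by (simp add: lead_coeff_prod)
  have "P = R"
  proof (rule poly_eqI_degree_lead_coeff[where n = "CARD('a)" and A = "range fls_const"])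
    show "poly.coeff P CARD('a) = poly.coeff R CARD('a)"
      using lcP degP q2 by (simp add: R_def coeff_monom coeff_pCons split: nat.splits)
    show "CARD('a) \<le> card (range (fls_const :: 'a \<Rightarrow> 'a fls))"
      using card_image[OF inj_fls_const[where 'a='a]] by simp
    show "degree P \<le> CARD('a)" using degP by simp
    show "degree R \<le> CARD('a)" unfolding R_def
      using degree_diff_le[of "monom (1::'a fls) CARD('a)" "CARD('a)" "[:0, 1:]"] q2
      by (auto simp: degree_monom_eq)
    fix z assume "z \<in> range (fls_const :: 'a \<Rightarrow> 'a fls)"
    then obtain c where c: "z = fls_const c" by auto
    have "poly P z = 0" unfolding polyP c by (auto intro: prod_zero)
    moreover have "poly R z = 0" unfolding R_def c
      by (simp add: poly_monom flip: fls_const_power add: field_pow_card)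
    ultimately show "poly P z = poly R z" by simp
  qed
  then have "poly P t = poly R t" by simp
  then show ?thesis by (simp add: polyP R_def poly_monom)
qed

lemma frob: "((a::'a::{field,finite} fls) + b) ^ CARD('a) = a ^ CARD('a) + b ^ CARD('a)"
proof -
  have W: "(\<Prod>c\<in>(UNIV::'a set). t - fls_const c) = (\<Prod>w\<in>range fls_const. t - w)" for t :: "'a fls"
    by (subst prod.reindex[OF inj_fls_const]) auto
  have "(\<Prod>w\<in>range fls_const. (a + b) - w) = (\<Prod>w\<in>range fls_const. a - w) + (\<Prod>w\<in>range fls_const. b - w)"
    by (rule additive_prod) (auto simp: fls_const_diff simp flip: fls_const_0)
  then have "(a + b) ^ CARD('a) - (a + b) = (a ^ CARD('a) - a) + (b ^ CARD('a) - b)"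
    by (simp only: prod_fls_const_UNIV flip: W)
  then show ?thesis by (simp add: algebra_simps)
qed

lemma frob_pow: "((a::'a::{field,finite} fls) + b) ^ (CARD('a) ^ n) = a ^ (CARD('a) ^ n) + b ^ (CARD('a) ^ n)"
proof (induction n)
  case (Suc n)
  have "(a + b) ^ (CARD('a) ^ Suc n) = ((a + b) ^ (CARD('a) ^ n)) ^ CARD('a)"
    by (simp add: power_mult[symmetric] mult.commute)
  also have "\<dots> = (a ^ (CARD('a) ^ n)) ^ CARD('a) + (b ^ (CARD('a) ^ n)) ^ CARD('a)"
    by (simp add: Suc frob)
  finally show ?case by (simp add: power_mult[symmetric] mult.commute)
qed simp

lemma frob_pow_diff: "((a::'a::{field,finite} fls) - b) ^ (CARD('a) ^ n) = a ^ (CARD('a) ^ n) - b ^ (CARD('a) ^ n)"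
  using frob_pow[of "a - b" b n] by (simp add: algebra_simps)

lemma frob_pow_const: "(fls_const (c::'a::{field,finite}) * a) ^ (CARD('a) ^ n) = fls_const c * a ^ (CARD('a) ^ n)"
  by (simp add: power_mult_distrib field_pow_card_pow flip: fls_const_power)


lemma LC_lin: "f \<in> LC \<Longrightarrow> f (fps_const c * x + fps_const d * y) = fls_const c * f x + fls_const d * f y"
  unfolding LC_def fq_linear_def by blast

lemma LC_smult: "f \<in> LC \<Longrightarrow> f (fps_const c * x) = fls_const c * f x"
  using LC_lin[of f c x 0 0] by simp

lemma LC_zero: "f \<in> LC \<Longrightarrow> f 0 = 0"
  using LC_smult[of f 0 0] by simp

lemma LC_add: "f \<in> LC \<Longrightarrow> f (x + y) = f x + f y"
  using LC_lin[of f 1 x 1 y] by simp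

lemma LC_diff: "f \<in> LC \<Longrightarrow> f (x - y) = f x - f y"
  using LC_lin[of f 1 x "-1" y] by (simp flip: fps_const_neg)

lemma LC_sum: "f \<in> LC \<Longrightarrow> f (\<Sum>i\<in>S. fps_const (g i) * h i) = (\<Sum>i\<in>S. fls_const (g i) * f (h i))"
  by (induction S rule: infinite_finite_induct) (auto simp: LC_zero LC_add LC_smult)

lemma LC_cont0:
  fixes f :: "'a::{field,finite} fps \<Rightarrow> 'a fls"
  assumes "f \<in> LC" "e > 0"
  shows "\<exists>d>0. \<forall>y. tabs (fps_to_fls y) < d \<longrightarrow> tabs (f y) < e"
proof -
  have "tcont f" using assms(1) unfolding LC_def by auto
  then obtain d where d: "d > 0" "\<forall>y. tabs (fps_to_fls y - fps_to_fls 0) < d \<longrightarrow> tabs (f y - f 0) < e"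
    unfolding tcont_def using assms(2) by blast
  show ?thesis using d LC_zero[OF assms(1)] by (intro exI[of _ d]) auto
qed

lemma tcontI0:
  fixes f :: "'a::{field,finite} fps \<Rightarrow> 'a fls"
  assumes lin: "fq_linear f"
  and c: "\<And>e. e > 0 \<Longrightarrow> \<exists>d>0. \<forall>y. tabs (fps_to_fls y) < d \<longrightarrow> tabs (f y) < e"
  shows "f \<in> LC"
proof -
  have fd: "f (y - x) = f y - f x" for x y
  proof -
    have "f (fps_const 1 * y + fps_const (-1) * x) = fls_const 1 * f y + fls_const (-1) * f x"
      using lin unfolding fq_linear_def by blast
    then show ?thesis by (simp flip: fps_const_neg)
  qed
  have "tcont f" unfolding tcont_def
  proof (intro allI impI)
    fix x and e :: real assume e: "e > 0"
    obtain d where d: "d > 0" "\<forall>y. tabs (fps_to_fls y) < d \<longrightarrow> tabs (f y) < e" using c[OF e] by blast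
    show "\<exists>d>0. \<forall>y. tabs (fps_to_fls y - fps_to_fls x) < d \<longrightarrow> tabs (f y - f x) < e"
    proof (intro exI[of _ d] conjI allI impI)
      fix y assume "tabs (fps_to_fls y - fps_to_fls x) < d"
      then have "tabs (fps_to_fls (y - x)) < d" by simp
      then have "tabs (f (y - x)) < e" using d by blast
      then show "tabs (f y - f x) < e" by (simp add: fd)
    qed (use d in auto)
  qed
  then show ?thesis using lin unfolding LC_def by auto
qed

lemma fq_linear_LC: "f \<in> LC \<Longrightarrow> fq_linear f"
  unfolding LC_def by auto


lemma LC_add_fun:
  fixes f g :: "'a::{field,finite} fps \<Rightarrow> 'a fls"
  assumes "f \<in> LC" "g \<in> LC" shows "(\<lambda>x. f x + g x) \<in> LC"
proof (rule tcontI0)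
  show "fq_linear (\<lambda>x. f x + g x)" using assms unfolding fq_linear_def LC_def
    by (simp add: algebra_simps)
  fix e :: real assume e: "e > 0"
  obtain d1 where d1: "d1 > 0" "\<forall>y. tabs (fps_to_fls y) < d1 \<longrightarrow> tabs (f y) < e"
    using LC_cont0[OF assms(1) e] by blast
  obtain d2 where d2: "d2 > 0" "\<forall>y. tabs (fps_to_fls y) < d2 \<longrightarrow> tabs (g y) < e"
    using LC_cont0[OF assms(2) e] by blast
  show "\<exists>d>0. \<forall>y. tabs (fps_to_fls y) < d \<longrightarrow> tabs (f y + g y) < e"
  proof (intro exI[of _ "min d1 d2"] conjI allI impI)
    fix y :: "'a fps" assume "tabs (fps_to_fls y) < min d1 d2"
    then have "tabs (f y) < e" "tabs (g y) < e" using d1 d2 by auto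
    then show "tabs (f y + g y) < e" using tabs_add_le[of "f y" "g y"] by linarith
  qed (use d1 d2 in auto)
qed

lemma LC_scale:
  fixes f :: "'a::{field,finite} fps \<Rightarrow> 'a fls"
  assumes "f \<in> LC" shows "(\<lambda>x. a * f x) \<in> LC"
proof (rule tcontI0)
  show "fq_linear (\<lambda>x. a * f x)" using assms unfolding fq_linear_def LC_def
    by (simp add: algebra_simps)
  fix e :: real assume e: "e > 0"
  show "\<exists>d>0. \<forall>y. tabs (fps_to_fls y) < d \<longrightarrow> tabs (a * f y) < e"
  proof (cases "a = 0")
    case True then show ?thesis using e by (auto intro: exI[of _ 1])
  next
    case False
    then have ta: "tabs a > 0" by (rule tabs_pos)
    obtain d where d: "d > 0" "\<forall>y. tabs (fps_to_fls y) < d \<longrightarrow> tabs (f y) < e / tabs a"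
      using LC_cont0[OF assms, of "e / tabs a"] e ta by auto
    show ?thesis
    proof (intro exI[of _ d] conjI allI impI)
      fix y :: "'a fps" assume "tabs (fps_to_fls y) < d"
      then have "tabs (f y) < e / tabs a" using d by auto
      then show "tabs (a * f y) < e" using ta by (simp add: tabs_mult field_simps)
    qed (use d in auto)
  qed
qed

lemma LC_zero_fun: "(\<lambda>x. 0) \<in> LC"
  by (rule tcontI0) (auto simp: fq_linear_def)

lemma LC_diff_fun: "f \<in> LC \<Longrightarrow> g \<in> LC \<Longrightarrow> (\<lambda>x. f x - g x) \<in> LC"
  using LC_add_fun[of f "\<lambda>x. (-1) * g x"] LC_scale[of g "-1"] by simp

lemma LC_sum_fun: "(\<And>n. n \<in> S \<Longrightarrow> b n \<in> LC) \<Longrightarrow> (\<lambda>x. \<Sum>n\<in>S. a n * b n x) \<in> LC"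
proof (induction S rule: infinite_finite_induct)
  case (insert n F)
  then have "(\<lambda>x. a n * b n x) \<in> LC" "(\<lambda>x. \<Sum>n\<in>F. a n * b n x) \<in> LC"
    using LC_scale by auto
  then show ?case using LC_add_fun insert by auto
qed (auto simp: LC_zero_fun)

lemma trunc_decomp:
  fixes x :: "'a::{field,finite} fps"
  shows "\<exists>y. x = (\<Sum>i<N. fps_const (x $ i) * fps_X ^ i) + y \<and> tabs (fps_to_fls y) \<le> 1 / real CARD('a) ^ N"
proof -
  define y where "y = x - (\<Sum>i<N. fps_const (x $ i) * fps_X ^ i)"
  have yc: "y $ i = 0" if "i < N" for i
  proof -
    have "(\<Sum>k<N. x $ k * (if i = k then 1 else 0)) = (\<Sum>k<N. if k = i then x $ i else 0)"
      by (rule sum.cong) auto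
    then show ?thesis using that by (simp add: y_def fps_sum_nth)
  qed
  have q: "real CARD('a) \<ge> 2" using q_ge2[where 'a='a] by simp
  have "tabs (fps_to_fls y) \<le> 1 / real CARD('a) ^ N"
  proof (cases "y = 0")
    case False
    then have "subdegree y \<ge> N" using yc by (intro subdegree_geI) auto
    then have "real CARD('a) ^ N \<le> real CARD('a) ^ subdegree y" using q by (intro power_increasing) auto
    then show ?thesis using False q by (simp add: tabs_fps frac_le)
  qed simp
  then show ?thesis by (intro exI[of _ y]) (auto simp: y_def)
qed

lemma small_pow: "d > 0 \<Longrightarrow> \<exists>N. 1 / real CARD('a::{field,finite}) ^ N < d"
proof -
  assume d: "d > 0"
  have q: "real CARD('a) > 1" using q_ge2[where 'a='a] by simp
  obtain N where "1 / d < real CARD('a) ^ N" using real_arch_pow[OF q] by blast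
  then show ?thesis using d q by (intro exI[of _ N]) (auto simp: field_simps)
qed

lemma LC_null:
  assumes "f \<in> LC"
  shows "(\<lambda>i. tabs (f (fps_X ^ i :: 'a::{field,finite} fps))) \<longlonglongrightarrow> 0"
proof (rule LIMSEQ_I)
  fix e :: real assume e: "e > 0"
  obtain d where d: "d > 0" "\<forall>y. tabs (fps_to_fls y) < d \<longrightarrow> tabs (f y) < e"
    using LC_cont0[OF assms e] by blast
  obtain N where N: "1 / real CARD('a) ^ N < d" using small_pow[OF d(1)] by blast
  have q: "real CARD('a) \<ge> 2" using q_ge2[where 'a='a] by simp
  show "\<exists>N. \<forall>n\<ge>N. norm (tabs (f (fps_X ^ n)) - 0) < e"
  proof (intro exI[of _ N] allI impI)
    fix n assume "n \<ge> N"
    then have "real CARD('a) ^ N \<le> real CARD('a) ^ n" using q by (intro power_increasing) auto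
    then have "1 / real CARD('a) ^ n \<le> 1 / real CARD('a) ^ N" using q by (intro divide_left_mono) auto
    then have "tabs (fps_to_fls (fps_X ^ n :: 'a fps)) < d" using N
      by (simp add: fps_to_fls_power tabs_fls_X_pow)
    then have "tabs (f (fps_X ^ n)) < e" using d(2) by blast
    then show "norm (tabs (f (fps_X ^ n)) - 0) < e" using tabs_nonneg[of "f (fps_X ^ n)"] by simp
  qed
qed

lemma LC_bound:
  assumes "f \<in> LC" "\<And>i. tabs (f (fps_X ^ i :: 'a::{field,finite} fps)) \<le> c" "c \<ge> 0"
  shows "tabs (f x) \<le> c"
proof (rule ccontr)
  assume "\<not> tabs (f x) \<le> c"
  then have lt: "c < tabs (f x)" by simp
  then obtain d where d: "d > 0" "\<forall>y. tabs (fps_to_fls y) < d \<longrightarrow> tabs (f y) < tabs (f x)"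
    using LC_cont0[OF assms(1), of "tabs (f x)"] assms(3) by auto
  obtain N where N: "1 / real CARD('a) ^ N < d" using small_pow[OF d(1)] by blast
  obtain y where y: "x = (\<Sum>i<N. fps_const (x $ i) * fps_X ^ i) + y" "tabs (fps_to_fls y) \<le> 1 / real CARD('a) ^ N"
    using trunc_decomp by blast
  have fy: "tabs (f y) < tabs (f x)" using d y N by auto
  have "f x = (\<Sum>i<N. fls_const (x $ i) * f (fps_X ^ i)) + f y"
  proof -
    have "f x = f ((\<Sum>i<N. fps_const (x $ i) * fps_X ^ i) + y)" using y(1) by (rule arg_cong)
    also have "\<dots> = f (\<Sum>i<N. fps_const (x $ i) * fps_X ^ i) + f y" by (rule LC_add[OF assms(1)])
    also have "f (\<Sum>i<N. fps_const (x $ i) * fps_X ^ i) = (\<Sum>i<N. fls_const (x $ i) * f (fps_X ^ i))"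
      by (rule LC_sum[OF assms(1)])
    finally show ?thesis .
  qed
  moreover have "tabs (\<Sum>i<N. fls_const (x $ i) * f (fps_X ^ i)) \<le> c"
  proof (rule tabs_sum_le)
    fix i
    have "tabs (fls_const (x $ i)) \<le> 1" by (cases "x $ i = 0") (auto simp: tabs_const)
    then have "tabs (fls_const (x $ i)) * tabs (f (fps_X ^ i)) \<le> 1 * tabs (f (fps_X ^ i))"
      using tabs_nonneg[of "f (fps_X ^ i)"] by (intro mult_right_mono) auto
    then show "tabs (fls_const (x $ i) * f (fps_X ^ i)) \<le> c"
      using assms(2)[of i] unfolding tabs_mult by linarith
  qed (use assms in auto)
  ultimately have "tabs (f x) \<le> max (tabs (\<Sum>i<N. fls_const (x $ i) * f (fps_X ^ i))) (tabs (f y))"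
    using tabs_add_le by metis
  then have "tabs (f x) \<le> max c (tabs (f y))" using \<open>tabs (\<Sum>i<N. _) \<le> c\<close> by linarith
  then show False using lt fy by linarith
qed

lemma null_max:
  fixes u :: "nat \<Rightarrow> real"
  assumes "u \<longlonglongrightarrow> 0" "\<And>i. u i \<ge> 0"
  shows "\<exists>i0. \<forall>i. u i \<le> u i0"
proof (cases "\<forall>i. u i = 0")
  case True then show ?thesis by auto
next
  case False
  then obtain j where j: "u j > 0" using assms(2) by (metis less_eq_real_def)
  obtain N where N: "\<forall>i\<ge>N. u i < u j"
    using LIMSEQ_D[OF assms(1) j] assms(2) by (metis abs_of_nonneg diff_zero real_norm_def)
  define M where "M = max N j"
  have "Max (u ` {..M}) \<in> u ` {..M}" by (intro Max_in) auto
  then obtain i0 where i0a: "i0 \<in> {..M}" "Max (u ` {..M}) = u i0" by blast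
  have i0: "i0 \<in> {..M}" "\<forall>i\<in>{..M}. u i \<le> u i0"
  proof -
    have "u i \<le> Max (u ` {..M})" if "i \<in> {..M}" for i using that by (intro Max_ge) auto
    then show "i0 \<in> {..M}" "\<forall>i\<in>{..M}. u i \<le> u i0" using i0a by auto
  qed
  show ?thesis
  proof (intro exI[of _ i0] allI)
    fix i show "u i \<le> u i0"
    proof (cases "i \<le> M")
      case True then show ?thesis using i0 by auto
    next
      case False
      then have "u i < u j" using N M_def by auto
      moreover have "u j \<le> u i0" using i0 M_def by auto
      ultimately show ?thesis by simp
    qed
  qed
qed

lemma LC_supnorm:
  fixes f :: "'a::{field,finite} fps \<Rightarrow> 'a fls"
  assumes "f \<in> LC"
  shows "\<exists>i0. supnorm f = tabs (f (fps_X ^ i0)) \<and> (\<forall>x. tabs (f x) \<le> supnorm f)"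
proof -
  have nn: "\<And>i. 0 \<le> tabs (f (fps_X ^ i))" by (rule tabs_nonneg)
  obtain i0 where i0: "\<forall>i. tabs (f (fps_X ^ i)) \<le> tabs (f (fps_X ^ i0))"
    using null_max[OF LC_null[OF assms] nn] by blast
  have all: "tabs (f x) \<le> tabs (f (fps_X ^ i0))" for x
    by (rule LC_bound[OF assms]) (use i0 nn in auto)
  have "supnorm f = tabs (f (fps_X ^ i0))" unfolding supnorm_def
  proof (rule cSup_eq_maximum)
    show "tabs (f (fps_X ^ i0)) \<in> range (\<lambda>x. tabs (f x))" by (rule rangeI)
    fix y assume "y \<in> range (\<lambda>x. tabs (f x))"
    then obtain x where "y = tabs (f x)" by blast
    then show "y \<le> tabs (f (fps_X ^ i0))" using all by simp
  qed
  then show ?thesis using all by auto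
qed

lemma LC_supnorm_le: "f \<in> LC \<Longrightarrow> tabs (f x) \<le> supnorm f"
  using LC_supnorm by blast

lemma supnorm_nonneg: "f \<in> LC \<Longrightarrow> supnorm f \<ge> 0"
  using LC_supnorm_le[of f 0] tabs_nonneg[of "f 0"] by linarith


primrec cl :: "('a::{field,finite} fps \<Rightarrow> 'a fls) \<Rightarrow> (nat \<Rightarrow> 'a fps \<Rightarrow> 'a fls) \<Rightarrow> nat \<Rightarrow> 'a fls list" where
  "cl f b 0 = []"
| "cl f b (Suc n) = cl f b n @ [(f (fps_X ^ n) - (\<Sum>k<n. cl f b n ! k * b k (fps_X ^ n))) / b n (fps_X ^ n)]"

lemma cl_len: "length (cl f b n) = n"
  by (induction n) auto

lemma cl_mono: "k < n \<Longrightarrow> n \<le> m \<Longrightarrow> cl f b m ! k = cl f b n ! k"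
proof (induction m)
  case 0 then show ?case by simp
next
  case (Suc m)
  show ?case
  proof (cases "n = Suc m")
    case False
    then have "n \<le> m" using Suc by simp
    then have "k < length (cl f b m)" using Suc by (simp add: cl_len)
    then have "cl f b (Suc m) ! k = cl f b m ! k" by (simp add: nth_append)
    then show ?thesis using Suc \<open>n \<le> m\<close> by simp
  qed simp
qed

definition coef where "coef f b n = cl f b (Suc n) ! n"

lemma coef_rec: "coef f b n = (f (fps_X ^ n) - (\<Sum>k<n. coef f b k * b k (fps_X ^ n))) / b n (fps_X ^ n)"
proof -
  have "(\<Sum>k<n. cl f b n ! k * b k (fps_X ^ n)) = (\<Sum>k<n. coef f b k * b k (fps_X ^ n))"
  proof (rule sum.cong)
    fix k assume "k \<in> {..<n}"
    then have "cl f b n ! k = cl f b (Suc k) ! k" by (intro cl_mono) auto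
    then show "cl f b n ! k * b k (fps_X ^ n) = coef f b k * b k (fps_X ^ n)" by (simp add: coef_def)
  qed simp
  moreover have "coef f b n = (f (fps_X ^ n) - (\<Sum>k<n. cl f b n ! k * b k (fps_X ^ n))) / b n (fps_X ^ n)"
    unfolding coef_def by (simp add: nth_append cl_len)
  ultimately show ?thesis by simp
qed

definition rem where "rem f b N x = f x - (\<Sum>n<N. coef f b n * b n x)"

lemma rem_Suc: "rem f b (Suc N) x = rem f b N x - coef f b N * b N x"
  unfolding rem_def by simp

lemma rem_0: "rem f b 0 = f"
  unfolding rem_def by (rule ext) simp

context
  fixes b :: "nat \<Rightarrow> 'a::{field,finite} fps \<Rightarrow> 'a fls"
  assumes LCb: "\<And>n. b n \<in> LC"
  and low: "\<And>n i. i < n \<Longrightarrow> b n (fps_X ^ i) = 0"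
  and diag: "\<And>n. tabs (b n (fps_X ^ n)) = 1"
  and off: "\<And>n i. n < i \<Longrightarrow> tabs (b n (fps_X ^ i)) \<le> 1/2"
begin

lemma b_le1: "tabs (b n (fps_X ^ i)) \<le> 1"
  using low[of i n] diag[of n] off[of n i] by (cases "i < n"; cases "i = n") auto

lemma b_nz: "b n (fps_X ^ n) \<noteq> 0"
  using diag[of n] by auto

lemma rem_LC: "f \<in> LC \<Longrightarrow> rem f b N \<in> LC"
proof -
  assume f: "f \<in> LC"
  have "(\<lambda>x. f x - (\<Sum>n<N. coef f b n * b n x)) \<in> LC"
    by (intro LC_diff_fun f LC_sum_fun LCb)
  then show ?thesis unfolding rem_def by (simp add: fun_eq_iff)
qed

lemma coef_eq: "coef f b N = rem f b N (fps_X ^ N) / b N (fps_X ^ N)"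
  by (subst coef_rec) (simp add: rem_def)

lemma rem_zero: "i < N \<Longrightarrow> rem f b N (fps_X ^ i) = 0"
proof (induction N)
  case 0 then show ?case by simp
next
  case (Suc N)
  show ?case
  proof (cases "i < N")
    case True
    then show ?thesis using Suc low[OF True] by (simp add: rem_Suc)
  next
    case False
    then have "i = N" using Suc by simp
    then show ?thesis using b_nz[of N] by (simp add: rem_Suc coef_eq)
  qed
qed

lemma tabs_coef: "tabs (coef f b N) = tabs (rem f b N (fps_X ^ N))"
  by (simp add: coef_eq tabs_divide diag)

abbreviation "sn f N \<equiv> supnorm (rem f b N)"

lemma rem_le: "f \<in> LC \<Longrightarrow> tabs (rem f b N x) \<le> sn f N"
  by (rule LC_supnorm_le[OF rem_LC])

lemma sn_nonneg: "f \<in> LC \<Longrightarrow> sn f N \<ge> 0"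
  by (rule supnorm_nonneg[OF rem_LC])

lemma coef_le: "f \<in> LC \<Longrightarrow> tabs (coef f b N) \<le> sn f N"
  by (simp add: tabs_coef rem_le)

lemma sn_Suc: "f \<in> LC \<Longrightarrow> sn f (Suc N) \<le> sn f N"
proof -
  assume f: "f \<in> LC"
  obtain i0 where i0: "sn f (Suc N) = tabs (rem f b (Suc N) (fps_X ^ i0))"
    using LC_supnorm[OF rem_LC[OF f, of "Suc N"]] by blast
  have "tabs (coef f b N * b N (fps_X ^ i0)) \<le> sn f N * 1"
    unfolding tabs_mult using coef_le[OF f, of N] b_le1[of N i0] tabs_nonneg sn_nonneg[OF f, of N]
    by (intro mult_mono) auto
  moreover have "tabs (rem f b N (fps_X ^ i0)) \<le> sn f N" by (rule rem_le[OF f])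
  ultimately show ?thesis unfolding i0 rem_Suc
    using tabs_diff_le[of "rem f b N (fps_X ^ i0)" "coef f b N * b N (fps_X ^ i0)"] by simp
qed

lemma sn_mono: "f \<in> LC \<Longrightarrow> M \<le> N \<Longrightarrow> sn f N \<le> sn f M"
  by (induction N) (auto simp: le_Suc_eq intro: order_trans[OF sn_Suc])

lemma rem_split: "M \<le> N \<Longrightarrow> rem f b N x = rem f b M x - (\<Sum>n\<in>{M..<N}. coef f b n * b n x)"
proof -
  assume "M \<le> N"
  then have "{..<N} = {..<M} \<union> {M..<N}" by auto
  then have "(\<Sum>n<N. coef f b n * b n x) = (\<Sum>n\<in>{..<M} \<union> {M..<N}. coef f b n * b n x)"
    by simp
  also have "\<dots> = (\<Sum>n<M. coef f b n * b n x) + (\<Sum>n\<in>{M..<N}. coef f b n * b n x)"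
    by (rule sum.union_disjoint) auto
  finally have "(\<Sum>n<N. coef f b n * b n x) = (\<Sum>n<M. coef f b n * b n x) + (\<Sum>n\<in>{M..<N}. coef f b n * b n x)" .
  then show ?thesis unfolding rem_def by simp
qed

lemma sn_step:
  assumes f: "f \<in> LC" and rho: "sn f N \<le> \<rho>"
  shows "\<exists>N'\<ge>N. sn f N' \<le> \<rho> / 2"
proof (cases "\<rho> > 0")
  case False
  then show ?thesis using rho by (intro exI[of _ N]) auto
next
  case True
  have lim: "(\<lambda>i. tabs (rem f b N (fps_X ^ i))) \<longlonglongrightarrow> 0" by (rule LC_null[OF rem_LC[OF f]])
  have "\<rho> / 2 > 0" using True by simp
  from LIMSEQ_D[OF lim this] obtain I where I: "\<forall>i\<ge>I. norm (tabs (rem f b N (fps_X ^ i)) - 0) < \<rho> / 2"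
    by blast
  define I' where "I' = max I N"
  obtain j where j: "sn f I' = tabs (rem f b I' (fps_X ^ j))"
    using LC_supnorm[OF rem_LC[OF f, of I']] by blast
  have "sn f I' \<le> \<rho> / 2"
  proof (cases "j < I'")
    case True
    then show ?thesis using j rem_zero[OF True] \<open>\<rho> > 0\<close> by simp
  next
    case False
    have r: "rem f b I' (fps_X ^ j) = rem f b N (fps_X ^ j) - (\<Sum>n\<in>{N..<I'}. coef f b n * b n (fps_X ^ j))"
      by (rule rem_split) (simp add: I'_def)
    have "norm (tabs (rem f b N (fps_X ^ j)) - 0) < \<rho> / 2"
      using I False unfolding I'_def by auto
    then have t1: "tabs (rem f b N (fps_X ^ j)) \<le> \<rho> / 2" by simp
    have t2: "tabs (\<Sum>n\<in>{N..<I'}. coef f b n * b n (fps_X ^ j)) \<le> \<rho> / 2"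
    proof (rule tabs_sum_le)
      fix n assume n: "n \<in> {N..<I'}"
      have "tabs (coef f b n) \<le> \<rho>"
        using coef_le[OF f, of n] sn_mono[OF f, of N n] n rho by auto
      moreover have "tabs (b n (fps_X ^ j)) \<le> 1/2" using n False by (intro off) auto
      ultimately have "tabs (coef f b n) * tabs (b n (fps_X ^ j)) \<le> \<rho> * (1/2)"
        using tabs_nonneg True by (intro mult_mono) auto
      then show "tabs (coef f b n * b n (fps_X ^ j)) \<le> \<rho> / 2" by (simp add: tabs_mult)
    qed (use True in auto)
    show ?thesis unfolding j r using tabs_diff_le[of "rem f b N (fps_X ^ j)"] t1 t2
      by (meson max.bounded_iff order_trans)
  qed
  then show ?thesis by (intro exI[of _ I']) (auto simp: I'_def)
qed

lemma sn_decay: "f \<in> LC \<Longrightarrow> \<exists>N. sn f N \<le> sn f 0 / 2 ^ k"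
proof (induction k)
  case 0 then show ?case by (intro exI[of _ 0]) simp
next
  case (Suc k)
  then obtain N where "sn f N \<le> sn f 0 / 2 ^ k" by blast
  then obtain N' where "sn f N' \<le> sn f 0 / 2 ^ k / 2" using sn_step[OF Suc.prems] by blast
  then show ?case by (intro exI[of _ N']) (simp add: field_simps)
qed

lemma sn_lim: "f \<in> LC \<Longrightarrow> e > 0 \<Longrightarrow> \<exists>N. \<forall>M\<ge>N. sn f M < e"
proof -
  assume f: "f \<in> LC" and e: "e > 0"
  obtain k where k: "sn f 0 / e < 2 ^ k" using real_arch_pow[of 2] by auto
  then have "sn f 0 / 2 ^ k < e" using e by (simp add: field_simps)
  moreover obtain N where "sn f N \<le> sn f 0 / 2 ^ k" using sn_decay[OF f] by blast
  ultimately show ?thesis using sn_mono[OF f] by (intro exI[of _ N]) (meson le_less_trans order_trans)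
qed

lemma coef_series: "f \<in> LC \<Longrightarrow> series_to (coef f b) b f"
  unfolding series_to_def
proof (rule LIMSEQ_I)
  fix e :: real assume f: "f \<in> LC" and e: "e > 0"
  obtain N where N: "\<forall>M\<ge>N. sn f M < e" using sn_lim[OF f e] by blast
  show "\<exists>N. \<forall>n\<ge>N. norm (supnorm (\<lambda>x. f x - (\<Sum>n<n. coef f b n * b n x)) - 0) < e"
  proof (intro exI[of _ N] allI impI)
    fix M assume "M \<ge> N"
    then have "sn f M < e" using N by auto
    moreover have "(\<lambda>x. f x - (\<Sum>n<M. coef f b n * b n x)) = rem f b M" by (simp add: rem_def fun_eq_iff)
    ultimately show "norm (supnorm (\<lambda>x. f x - (\<Sum>n<M. coef f b n * b n x)) - 0) < e"
      using sn_nonneg[OF f, of M] by simp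
  qed
qed

lemma coef_null: "f \<in> LC \<Longrightarrow> null_seq (coef f b)"
  unfolding null_seq_def
proof (rule LIMSEQ_I)
  fix e :: real assume f: "f \<in> LC" and e: "e > 0"
  obtain N where N: "\<forall>M\<ge>N. sn f M < e" using sn_lim[OF f e] by blast
  show "\<exists>N. \<forall>n\<ge>N. norm (tabs (coef f b n) - 0) < e"
  proof (intro exI[of _ N] allI impI)
    fix M assume "M \<ge> N"
    then show "norm (tabs (coef f b M) - 0) < e" using N coef_le[OF f, of M] tabs_nonneg[of "coef f b M"] by auto
  qed
qed

lemma sum_vanish: "N \<ge> Suc i \<Longrightarrow> (\<Sum>n<N. a n * b n (fps_X ^ i)) = (\<Sum>n<Suc i. a n * b n (fps_X ^ i))"
  by (rule sum.mono_neutral_right) (auto simp: low)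

lemma expand:
  assumes f: "f \<in> LC" and s: "series_to a b f"
  shows "f (fps_X ^ i) = (\<Sum>n<Suc i. a n * b n (fps_X ^ i))"
proof (rule ccontr)
  define c where "c = f (fps_X ^ i) - (\<Sum>n<Suc i. a n * b n (fps_X ^ i))"
  assume "f (fps_X ^ i) \<noteq> (\<Sum>n<Suc i. a n * b n (fps_X ^ i))"
  then have c: "tabs c > 0" unfolding c_def by (intro tabs_pos) auto
  obtain N0 where N0: "\<forall>N\<ge>N0. norm (supnorm (\<lambda>x. f x - (\<Sum>n<N. a n * b n x)) - 0) < tabs c"
    using LIMSEQ_D[OF s[unfolded series_to_def] c] by blast
  define N where "N = max N0 (Suc i)"
  have LCN: "(\<lambda>x. f x - (\<Sum>n<N. a n * b n x)) \<in> LC" by (intro LC_diff_fun f LC_sum_fun LCb)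
  have "tabs (f (fps_X ^ i) - (\<Sum>n<N. a n * b n (fps_X ^ i))) \<le> supnorm (\<lambda>x. f x - (\<Sum>n<N. a n * b n x))"
    using LC_supnorm_le[OF LCN] by blast
  moreover have "(\<Sum>n<N. a n * b n (fps_X ^ i)) = (\<Sum>n<Suc i. a n * b n (fps_X ^ i))"
    by (rule sum_vanish) (simp add: N_def)
  moreover have "norm (supnorm (\<lambda>x. f x - (\<Sum>n<N. a n * b n x)) - 0) < tabs c"
    using N0 by (auto simp: N_def)
  then have "supnorm (\<lambda>x. f x - (\<Sum>n<N. a n * b n x)) < tabs c" by (simp add: abs_less_iff)
  ultimately show False unfolding c_def by simp
qed

lemma coef_expand: "f \<in> LC \<Longrightarrow> f (fps_X ^ i) = (\<Sum>n<Suc i. coef f b n * b n (fps_X ^ i))"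
  using rem_zero[of i "Suc i" f] unfolding rem_def by simp

lemma uniq:
  assumes f: "f \<in> LC" and a: "\<And>i. f (fps_X ^ i) = (\<Sum>n<Suc i. a n * b n (fps_X ^ i))"
  shows "a = coef f b"
proof (rule ext)
  fix n show "a n = coef f b n"
  proof (induction n rule: less_induct)
    case (less n)
    have s: "(\<Sum>k<n. a k * b k (fps_X ^ n)) = (\<Sum>k<n. coef f b k * b k (fps_X ^ n))"
      using less by (intro sum.cong) auto
    have "a n * b n (fps_X ^ n) = coef f b n * b n (fps_X ^ n)"
      using a[of n] coef_expand[OF f, of n] s by simp metis
    then show ?case using b_nz[of n] by (metis mult_cancel_right)
  qed
qed

lemma coef_norm:
  assumes f: "f \<in> LC"
  shows "(\<exists>n. tabs (coef f b n) = supnorm f) \<and> (\<forall>n. tabs (coef f b n) \<le> supnorm f)"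
proof -
  have le: "tabs (coef f b n) \<le> supnorm f" for n
    using coef_le[OF f, of n] sn_mono[OF f, of 0 n] rem_0[of f b] by auto
  obtain i0 where i0: "supnorm f = tabs (f (fps_X ^ i0))" using LC_supnorm[OF f] by blast
  obtain n where n: "n \<in> {..<Suc i0}" "tabs (\<Sum>n<Suc i0. coef f b n * b n (fps_X ^ i0)) \<le> tabs (coef f b n * b n (fps_X ^ i0))"
    using tabs_sum_ex[of "{..<Suc i0}" "\<lambda>n. coef f b n * b n (fps_X ^ i0)"] by auto
  have "tabs (coef f b n * b n (fps_X ^ i0)) \<le> tabs (coef f b n) * 1"
    unfolding tabs_mult using b_le1 tabs_nonneg by (intro mult_left_mono) auto
  then have "supnorm f \<le> tabs (coef f b n)" using n i0 coef_expand[OF f, of i0] by simp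
  then show ?thesis using le by (meson antisym)
qed

lemma criterion: "orthonormal_basis b"
proof -
  have A: "\<exists>!a. null_seq a \<and> series_to a b f" if f: "f \<in> LC" for f
  proof (rule ex1I[of _ "coef f b"])
    show "null_seq (coef f b) \<and> series_to (coef f b) b f" using coef_null[OF f] coef_series[OF f] by auto
    fix a assume "null_seq a \<and> series_to a b f"
    then show "a = coef f b" using uniq[OF f] expand[OF f] by blast
  qed
  have B: "(\<exists>n. tabs (a n) = supnorm f) \<and> (\<forall>n. tabs (a n) \<le> supnorm f)"
    if f: "f \<in> LC" and a: "null_seq a \<and> series_to a b f" for f a
  proof -
    have "a = coef f b" using uniq[OF f] expand[OF f] a by blast
    then show ?thesis using coef_norm[OF f] by simp
  qed
  show ?thesis unfolding orthonormal_basis_def using LCb A B by blast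
qed

end


lemma power_family:
  fixes g :: "nat \<Rightarrow> 'a::{field,finite} fps \<Rightarrow> 'a fls"
  assumes lin: "\<And>n. fq_linear (g n)"
  and bnd: "\<And>n. \<exists>C>0. \<forall>z. tabs (g n z) \<le> C * tabs (fps_to_fls z)"
  and low: "\<And>n i. i < n \<Longrightarrow> g n (fps_X ^ i) = 0"
  and diag: "\<And>n. tabs (g n (fps_X ^ n)) = 1"
  and off: "\<And>n i. n < i \<Longrightarrow> tabs (g n (fps_X ^ i)) \<le> 1/2"
  shows "orthonormal_basis (\<lambda>n x. g n x ^ (CARD('a) ^ m))"
proof -
  define k where "k = CARD('a) ^ m"
  have k1: "k \<ge> 1" unfolding k_def using q_ge2[where 'a='a] by simp
  have LCb: "(\<lambda>x. g n x ^ k) \<in> LC" for n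
  proof (rule tcontI0)
    show "fq_linear (\<lambda>x. g n x ^ k)"
      unfolding fq_linear_def
    proof (intro allI)
      fix c d x y
      have "g n (fps_const c * x + fps_const d * y) = fls_const c * g n x + fls_const d * g n y"
        using lin[of n] unfolding fq_linear_def by blast
      then show "g n (fps_const c * x + fps_const d * y) ^ k = fls_const c * g n x ^ k + fls_const d * g n y ^ k"
        unfolding k_def by (simp add: frob_pow frob_pow_const)
    qed
    fix e :: real assume e: "e > 0"
    obtain C where C: "C > 0" "\<forall>z. tabs (g n z) \<le> C * tabs (fps_to_fls z)" using bnd[of n] by blast
    show "\<exists>d>0. \<forall>y. tabs (fps_to_fls y) < d \<longrightarrow> tabs (g n y ^ k) < e"
    proof (intro exI[of _ "min 1 e / C"] conjI allI impI)
      show "min 1 e / C > 0" using C e by simp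
      fix y :: "'a fps" assume y: "tabs (fps_to_fls y) < min 1 e / C"
      have t: "tabs (g n y) < min 1 e" using C y by (smt (verit) mult.commute pos_less_divide_eq)
      have "tabs (g n y) ^ k \<le> tabs (g n y) ^ 1"
        using t tabs_nonneg[of "g n y"] k1 by (intro power_decreasing) auto
      then show "tabs (g n y ^ k) < e" using t by (simp add: tabs_power)
    qed
  qed
  have "orthonormal_basis (\<lambda>n x. g n x ^ k)"
  proof (rule criterion)
    show "(\<lambda>x. g n x ^ k) \<in> LC" for n by (rule LCb)
    show "g n (fps_X ^ i) ^ k = 0" if "i < n" for n i using low[OF that] k1 by simp
    show "tabs (g n (fps_X ^ n) ^ k) = 1" for n using diag[of n] by (simp add: tabs_power)
    show "tabs (g n (fps_X ^ i) ^ k) \<le> 1/2" if "n < i" for n i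
    proof -
      have "tabs (g n (fps_X ^ i)) ^ k \<le> tabs (g n (fps_X ^ i)) ^ 1"
        using off[OF that] tabs_nonneg[of "g n (fps_X ^ i)"] k1 by (intro power_decreasing) auto
      then show ?thesis using off[OF that] by (simp add: tabs_power)
    qed
  qed
  then show ?thesis unfolding k_def .
qed

lemma hasse_lin: "fq_linear (hasse n :: 'a::{field,finite} fps \<Rightarrow> 'a fls)"
  unfolding fq_linear_def
proof (intro allI)
  fix c d :: 'a and x y :: "'a fps"
  have "Abs_fps (\<lambda>j. of_nat ((j + n) choose n) * (fps_const c * x + fps_const d * y) $ (j + n))
      = fps_const c * Abs_fps (\<lambda>j. of_nat ((j + n) choose n) * x $ (j + n))
        + fps_const d * Abs_fps (\<lambda>j. of_nat ((j + n) choose n) * y $ (j + n))"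
    by (rule fps_ext) (simp add: algebra_simps)
  then show "hasse n (fps_const c * x + fps_const d * y) = fls_const c * hasse n x + fls_const d * hasse n y"
    unfolding hasse_def by (simp add: fls_times_fps_to_fls)
qed

lemma hasse_bnd: "\<exists>C>0. \<forall>z. tabs (hasse n z :: 'a::{field,finite} fls) \<le> C * tabs (fps_to_fls z)"
proof (intro exI[of _ "real CARD('a) ^ n"] conjI allI)
  have q: "real CARD('a) \<ge> 2" using q_ge2[where 'a='a] by simp
  then show "real CARD('a) ^ n > 0" by simp
  fix z :: "'a fps"
  define H where "H = Abs_fps (\<lambda>j. of_nat ((j + n) choose n) * z $ (j + n))"
  show "tabs (hasse n z) \<le> real CARD('a) ^ n * tabs (fps_to_fls z)"
  proof (cases "H = 0")
    case True
    then show ?thesis using q tabs_nonneg[of "fps_to_fls z"] by (simp add: hasse_def H_def[symmetric])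
  next
    case False
    have "H $ subdegree H \<noteq> 0" using False by simp
    then have zn: "z $ (subdegree H + n) \<noteq> 0" by (simp add: H_def)
    then have z0: "z \<noteq> 0" by auto
    have "subdegree z \<le> subdegree H + n" using zn by (rule subdegree_leI)
    then have "real CARD('a) ^ subdegree z \<le> real CARD('a) ^ (subdegree H + n)"
      using q by (intro power_increasing) auto
    then have "1 / real CARD('a) ^ subdegree H \<le> real CARD('a) ^ n * (1 / real CARD('a) ^ subdegree z)"
      using q by (simp add: field_simps power_add)
    then show ?thesis using False z0 by (simp add: hasse_def H_def[symmetric] tabs_fps)
  qed
qed

lemma hasse_X: "hasse n (fps_X ^ i :: 'a::{field,finite} fps) =
   (if i < n then 0 else fls_const (of_nat (i choose n)) * fls_X ^ (i - n))"
proof (cases "i < n")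
  case True
  have "Abs_fps (\<lambda>j. of_nat ((j + n) choose n) * (fps_X ^ i :: 'a fps) $ (j + n)) = 0"
    using True by (intro fps_ext) simp
  then show ?thesis using True unfolding hasse_def by simp
next
  case False
  have "Abs_fps (\<lambda>j. of_nat ((j + n) choose n) * (fps_X ^ i :: 'a fps) $ (j + n))
     = fps_const (of_nat (i choose n)) * fps_X ^ (i - n)"
    using False by (intro fps_ext) auto
  then show ?thesis using False unfolding hasse_def
    by (simp add: fls_times_fps_to_fls fps_to_fls_power)
qed

lemma hasse_family: "orthonormal_basis (\<lambda>n x. (hasse n x :: 'a::{field,finite} fls) ^ (CARD('a) ^ m))"
proof (rule power_family)
  show "fq_linear (hasse n :: 'a fps \<Rightarrow> 'a fls)" for n by (rule hasse_lin)
  show "\<exists>C>0. \<forall>z. tabs (hasse n z :: 'a fls) \<le> C * tabs (fps_to_fls z)" for n by (rule hasse_bnd)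
  show "hasse n (fps_X ^ i :: 'a fps) = 0" if "i < n" for n i using that by (simp add: hasse_X)
  show "tabs (hasse n (fps_X ^ n :: 'a fps)) = 1" for n by (simp add: hasse_X)
  show "tabs (hasse n (fps_X ^ i :: 'a fps)) \<le> 1/2" if "n < i" for n i
  proof -
    have q: "real CARD('a) \<ge> 2" using q_ge2[where 'a='a] by simp
    have c: "tabs (fls_const (of_nat (i choose n) :: 'a)) \<le> 1"
      by (cases "(of_nat (i choose n) :: 'a) = 0") (auto simp: tabs_const)
    have "real CARD('a) ^ 1 \<le> real CARD('a) ^ (i - n)" using q that by (intro power_increasing) auto
    then have p: "2 \<le> real CARD('a) ^ (i - n)" using q by (metis power_one_right order_trans)
    then have "1 / real CARD('a) ^ (i - n) \<le> 1 / 2" by (intro divide_left_mono) auto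
    then have x: "tabs (fls_X ^ (i - n) :: 'a fls) \<le> 1/2" by (simp add: tabs_fls_X_pow)
    have "tabs (fls_const (of_nat (i choose n) :: 'a)) * tabs (fls_X ^ (i - n) :: 'a fls) \<le> 1 * (1/2)"
      using c x tabs_nonneg by (intro mult_mono) auto
    then show ?thesis using that by (simp add: hasse_X tabs_mult)
  qed
qed


definition Wn :: "nat \<Rightarrow> 'a::{field,finite} fps set" where "Wn n = {m. \<forall>i\<ge>n. m $ i = 0}"

lemma carlitz_e_Wn: "carlitz_e n x = (\<Prod>m\<in>Wn n. fps_to_fls x - fps_to_fls m)"
  unfolding carlitz_e_def Wn_def ..

lemma Wn_0: "Wn 0 = {0 :: 'a::{field,finite} fps}"
  unfolding Wn_def by (auto intro: fps_ext)

lemma Wn_bij: "bij_betw (\<lambda>(c, m). fps_const c + fps_X * m) (UNIV \<times> Wn n) (Wn (Suc n) :: 'a::{field,finite} fps set)"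
proof (rule bij_betw_byWitness[where f' = "\<lambda>m. (m $ 0, Abs_fps (\<lambda>i. m $ Suc i))"])
  show "\<forall>a\<in>UNIV \<times> Wn n. (\<lambda>m. (m $ 0, Abs_fps (\<lambda>i. m $ Suc i))) ((\<lambda>(c, m). fps_const c + fps_X * m) a) = a"
    by (auto intro: fps_ext)
  show "\<forall>a'\<in>Wn (Suc n). (\<lambda>(c, m). fps_const c + fps_X * m) ((\<lambda>m. (m $ 0, Abs_fps (\<lambda>i. m $ Suc i))) a') = (a' :: 'a fps)"
  proof
    fix m :: "'a fps"
    show "(\<lambda>(c, m). fps_const c + fps_X * m) ((\<lambda>m. (m $ 0, Abs_fps (\<lambda>i. m $ Suc i))) m) = m"
      by (rule fps_ext) (auto simp: fps_X_mult_nth)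
  qed
  show "(\<lambda>(c, m). fps_const c + fps_X * m) ` (UNIV \<times> Wn n) \<subseteq> (Wn (Suc n) :: 'a fps set)"
    by (auto simp: Wn_def fps_X_mult_nth)
  show "(\<lambda>m. (m $ 0, Abs_fps (\<lambda>i. m $ Suc i))) ` Wn (Suc n) \<subseteq> UNIV \<times> (Wn n :: 'a fps set)"
    by (auto simp: Wn_def)
qed

lemma Wn_card: "finite (Wn n :: 'a::{field,finite} fps set) \<and> card (Wn n :: 'a fps set) = CARD('a) ^ n"
proof (induction n)
  case 0 then show ?case by (simp add: Wn_0)
next
  case (Suc n)
  have "finite ((UNIV :: 'a set) \<times> (Wn n :: 'a fps set))" using Suc.IH by (intro finite_cartesian_product) auto
  moreover have "card ((UNIV :: 'a set) \<times> (Wn n :: 'a fps set)) = CARD('a) ^ Suc n" using Suc by (simp add: card_cartesian_product)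
  ultimately show ?case using bij_betw_finite[OF Wn_bij] bij_betw_same_card[OF Wn_bij] by metis
qed

lemma Wn_fin: "finite (Wn n :: 'a::{field,finite} fps set)" using Wn_card by blast

lemma Wn_zero: "0 \<in> Wn n" unfolding Wn_def by simp

lemma tabs_prod: "tabs (\<Prod>i\<in>S. f i :: 'a::{field,finite} fls) = (\<Prod>i\<in>S. tabs (f i))"
  by (induction S rule: infinite_finite_induct) (auto simp: tabs_mult)

lemma inj_fps_to_fls: "inj_on fps_to_fls A" by (auto simp: inj_on_def)

lemma e_add: "carlitz_e n (x + y :: 'a::{field,finite} fps) = carlitz_e n x + carlitz_e n y"
proof -
  have r: "carlitz_e n z = (\<Prod>w\<in>fps_to_fls ` Wn n. fps_to_fls z - w)" for z :: "'a fps"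
    unfolding carlitz_e_Wn by (subst prod.reindex[OF inj_fps_to_fls]) simp
  have "(\<Prod>w\<in>fps_to_fls ` Wn n. (fps_to_fls x + fps_to_fls y) - w) =
        (\<Prod>w\<in>fps_to_fls ` Wn n. fps_to_fls x - w) + (\<Prod>w\<in>fps_to_fls ` Wn n. fps_to_fls y - w)"
  proof (rule additive_prod)
    show "finite (fps_to_fls ` (Wn n :: 'a fps set))" using Wn_fin by (intro finite_imageI)
    show "0 \<in> fps_to_fls ` (Wn n :: 'a fps set)" using Wn_zero by (metis fps_zero_to_fls image_eqI)
    fix u v assume "u \<in> fps_to_fls ` (Wn n :: 'a fps set)" "v \<in> fps_to_fls ` (Wn n :: 'a fps set)"
    then obtain u' v' where "u = fps_to_fls u'" "v = fps_to_fls v'" "u' \<in> Wn n" "v' \<in> Wn n" by auto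
    moreover have "u' - v' \<in> Wn n" using \<open>u' \<in> Wn n\<close> \<open>v' \<in> Wn n\<close> by (auto simp: Wn_def)
    ultimately show "u - v \<in> fps_to_fls ` (Wn n :: 'a fps set)" by (metis fps_to_fls_minus image_eqI)
  qed
  then show ?thesis by (simp add: r)
qed

lemma e_zero_factor: "m \<in> Wn n \<Longrightarrow> carlitz_e n m = 0"
  unfolding carlitz_e_Wn by (rule prod_zero) (use Wn_fin in auto)

lemma e_smult: "carlitz_e n (fps_const c * x :: 'a::{field,finite} fps) = fls_const c * carlitz_e n x"
proof (cases "c = 0")
  case True then show ?thesis using e_zero_factor[OF Wn_zero] by simp
next
  case False
  have "carlitz_e n (fps_const c * x) = (\<Prod>m\<in>Wn n. fls_const c * fps_to_fls x - fps_to_fls m)"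
    unfolding carlitz_e_Wn by (simp add: fls_times_fps_to_fls)
  also have "\<dots> = (\<Prod>m\<in>Wn n. fls_const c * fps_to_fls x - fps_to_fls (fps_const c * m))"
  proof (rule prod.reindex_bij_witness[of _ "\<lambda>m. fps_const c * m" "\<lambda>m. fps_const (inverse c) * m"])
    fix m :: "'a fps" assume "m \<in> Wn n"
    then show "fps_const c * (fps_const (inverse c) * m) = m" "fps_const (inverse c) * m \<in> Wn n"
      using False by (auto simp: Wn_def mult.assoc[symmetric] right_inverse left_inverse)
  next
    fix m :: "'a fps" assume "m \<in> Wn n"
    then show "fps_const (inverse c) * (fps_const c * m) = m" "fps_const c * m \<in> Wn n"
      using False by (auto simp: Wn_def mult.assoc[symmetric] right_inverse left_inverse)
  qed (use False in \<open>auto simp: mult.assoc[symmetric] right_inverse\<close>)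
  also have "\<dots> = (\<Prod>m\<in>Wn n. fls_const c * (fps_to_fls x - fps_to_fls m))"
    by (simp add: fls_times_fps_to_fls algebra_simps)
  also have "\<dots> = fls_const c ^ card (Wn n :: 'a fps set) * carlitz_e n x"
    unfolding carlitz_e_Wn by (simp add: prod.distrib)
  also have "fls_const c ^ card (Wn n :: 'a fps set) = fls_const c"
  proof -
    have "card (Wn n :: 'a fps set) = CARD('a) ^ n" using Wn_card by blast
    then show ?thesis by (simp add: field_pow_card_pow flip: fls_const_power)
  qed
  finally show ?thesis .
qed

lemma F0: "carlitzF TYPE('a::{field,finite}) 0 = 1"
  unfolding carlitzF_def by simp

lemma E_eq: "carlitzE n x = carlitz_e n x / carlitzF TYPE('a::{field,finite}) n"
proof (cases "n = 0")
  case True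
  then show ?thesis unfolding carlitzE_def carlitz_e_Wn by (simp add: Wn_0 F0)
qed (simp add: carlitzE_def)

lemma E_lin: "fq_linear (carlitzE n :: 'a::{field,finite} fps \<Rightarrow> 'a fls)"
  unfolding fq_linear_def E_eq by (simp add: e_add e_smult add_divide_distrib)

lemma tabs_bracket: "i \<ge> 1 \<Longrightarrow> tabs (bracket TYPE('a::{field,finite}) i) = 1 / real CARD('a)"
proof -
  assume i: "i \<ge> 1"
  have q: "CARD('a) \<ge> 2" by (rule q_ge2)
  have "CARD('a) ^ 1 < CARD('a) ^ i" if "i > 1" using q that by (intro power_strict_increasing) auto
  have "CARD('a) ^ i \<ge> CARD('a) ^ 1" using q i by (intro power_increasing) auto
  then have gt: "CARD('a) ^ i > 1" using q by simp
  have gt': "(1::int) < int CARD('a) ^ i" using gt by (metis of_nat_1 of_nat_less_iff of_nat_power)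
  have sd: "fls_subdegree (fls_X ^ (CARD('a) ^ i) - fls_X :: 'a fls) = 1"
    using gt gt' by (subst fls_subdegree_diff_eq2) auto
  have nz: "(fls_X ^ (CARD('a) ^ i) - fls_X :: 'a fls) \<noteq> 0"
  proof
    assume "(fls_X ^ (CARD('a) ^ i) - fls_X :: 'a fls) = 0"
    then have "fls_subdegree (fls_X ^ (CARD('a) ^ i) :: 'a fls) = fls_subdegree (fls_X :: 'a fls)" by simp
    then show False using gt' by simp
  qed
  show ?thesis unfolding tabs_def bracket_def using nz sd by (simp add: power_int_minus inverse_eq_divide)
qed

definition Hq :: "'a::{field,finite} itself \<Rightarrow> nat \<Rightarrow> nat" where "Hq t n = (\<Sum>j<n. CARD('a) ^ j)"

lemma tabs_F: "tabs (carlitzF TYPE('a::{field,finite}) n) = (1 / real CARD('a)) ^ Hq TYPE('a) n"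
proof -
  have "tabs (carlitzF TYPE('a) n) = (\<Prod>i\<in>{1..n}. (1 / real CARD('a)) ^ (CARD('a) ^ (n - i)))"
    unfolding carlitzF_def tabs_prod by (intro prod.cong) (auto simp: tabs_power tabs_bracket)
  also have "\<dots> = (1 / real CARD('a)) ^ (\<Sum>i\<in>{1..n}. CARD('a) ^ (n - i))"
    by (simp add: power_sum)
  also have "(\<Sum>i\<in>{1..n}. CARD('a) ^ (n - i)) = Hq TYPE('a) n"
    unfolding Hq_def by (rule sum.reindex_bij_witness[of _ "\<lambda>j. n - j" "\<lambda>i. n - i"]) auto
  finally show ?thesis .
qed

lemma F_nz: "carlitzF TYPE('a::{field,finite}) n \<noteq> 0"
proof -
  have "tabs (carlitzF TYPE('a) n) \<noteq> 0" unfolding tabs_F using q_ge2[where 'a='a] by simp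
  then show ?thesis by simp
qed

lemma tabs_nonunit: "c \<noteq> 0 \<Longrightarrow> tabs (fps_to_fls (fps_X ^ Suc i - (fps_const c + fps_X * m)) :: 'a::{field,finite} fls) = 1"
proof -
  assume c: "c \<noteq> 0"
  let ?y = "fps_X ^ Suc i - (fps_const c + fps_X * m) :: 'a fps"
  have y0: "?y $ 0 \<noteq> 0" using c by simp
  have "?y \<noteq> 0" using y0 by (metis fps_zero_nth)
  moreover have sd: "subdegree ?y = 0" using y0 by (rule subdegree_eq_0)
  ultimately have "tabs (fps_to_fls ?y) = 1 / real CARD('a) ^ subdegree ?y" by (intro tabs_fps)
  also have "\<dots> = 1" using sd by simp
  finally show ?thesis .
qed

lemma tabs_unit0: "tabs (fps_to_fls (fps_X ^ Suc i - (fps_const 0 + fps_X * m)) :: 'a::{field,finite} fls)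
    = (1 / real CARD('a)) * tabs (fps_to_fls (fps_X ^ i - m))"
proof -
  have "fps_X ^ Suc i - (fps_const 0 + fps_X * m) = (fps_X :: 'a fps) * (fps_X ^ i - m)"
    by (simp add: algebra_simps)
  then show ?thesis using tabs_fls_X_pow[of 1, where 'a='a]
    by (simp add: fls_times_fps_to_fls tabs_mult)
qed

lemma e_rec: "tabs (carlitz_e (Suc n) (fps_X ^ Suc i :: 'a::{field,finite} fps)) =
    (1 / real CARD('a)) ^ (CARD('a) ^ n) * tabs (carlitz_e n (fps_X ^ i :: 'a fps))"
proof -
  let ?g = "\<lambda>m. tabs (fps_to_fls (fps_X ^ Suc i :: 'a fps) - fps_to_fls m)"
  have "tabs (carlitz_e (Suc n) (fps_X ^ Suc i :: 'a fps)) = (\<Prod>m\<in>Wn (Suc n). ?g m)"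
    unfolding carlitz_e_Wn tabs_prod ..
  also have "\<dots> = (\<Prod>(c, m)\<in>UNIV \<times> Wn n. ?g (fps_const c + fps_X * m))"
    using prod.reindex_bij_betw[OF Wn_bij, of ?g] by (simp add: case_prod_unfold)
  also have "\<dots> = (\<Prod>c\<in>UNIV. \<Prod>m\<in>Wn n. ?g (fps_const c + fps_X * m))"
    by (rule prod.cartesian_product[symmetric])
  also have "\<dots> = (\<Prod>c\<in>{0}. \<Prod>m\<in>Wn n. ?g (fps_const c + fps_X * m))"
  proof (rule prod.mono_neutral_right)
    show "\<forall>c\<in>UNIV - {0}. (\<Prod>m\<in>Wn n. ?g (fps_const c + fps_X * m)) = 1"
    proof
      fix c :: 'a assume "c \<in> UNIV - {0}"
      then have c: "c \<noteq> 0" by simp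
      have "?g (fps_const c + fps_X * m) = 1" for m
      proof -
        have "tabs (fps_to_fls (fps_X ^ Suc i - (fps_const c + fps_X * m)) :: 'a fls) = 1"
          using c by (rule tabs_nonunit)
        then show ?thesis by (simp only: fps_to_fls_minus)
      qed
      then show "(\<Prod>m\<in>Wn n. ?g (fps_const c + fps_X * m)) = 1" by simp
    qed
  qed auto
  also have "\<dots> = (\<Prod>m\<in>Wn n. ?g (fps_const 0 + fps_X * m))" by simp
  also have "\<dots> = (\<Prod>m\<in>Wn n. (1 / real CARD('a)) * tabs (fps_to_fls (fps_X ^ i :: 'a fps) - fps_to_fls m))"
  proof (intro prod.cong refl)
    fix m :: "'a fps"
    have "tabs (fps_to_fls (fps_X ^ Suc i - (fps_const 0 + fps_X * m)) :: 'a fls)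
        = (1 / real CARD('a)) * tabs (fps_to_fls (fps_X ^ i - m))" by (rule tabs_unit0)
    then show "?g (fps_const 0 + fps_X * m) = (1 / real CARD('a)) * tabs (fps_to_fls (fps_X ^ i :: 'a fps) - fps_to_fls m)"
      by (simp only: fps_to_fls_minus)
  qed
  also have "\<dots> = (\<Prod>m\<in>(Wn n :: 'a fps set). 1 / real CARD('a)) * (\<Prod>m\<in>Wn n. tabs (fps_to_fls (fps_X ^ i :: 'a fps) - fps_to_fls m))"
    by (rule prod.distrib)
  also have "(\<Prod>m\<in>(Wn n :: 'a fps set). 1 / real CARD('a)) = (1 / real CARD('a)) ^ (CARD('a) ^ n)"
  proof -
    have "card (Wn n :: 'a fps set) = CARD('a) ^ n" using Wn_card by blast
    then show ?thesis by simp
  qed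
  also have "(\<Prod>m\<in>Wn n. tabs (fps_to_fls (fps_X ^ i :: 'a fps) - fps_to_fls m)) = tabs (carlitz_e n (fps_X ^ i :: 'a fps))"
    unfolding carlitz_e_Wn tabs_prod ..
  finally show ?thesis .
qed

lemma e_val: "i \<ge> n \<Longrightarrow> tabs (carlitz_e n (fps_X ^ i :: 'a::{field,finite} fps)) =
    (1 / real CARD('a)) ^ (Hq TYPE('a) n + (i - n))"
proof (induction n arbitrary: i)
  case 0
  then show ?case unfolding carlitz_e_Wn Wn_0
    by (simp add: Hq_def fps_to_fls_power tabs_fls_X_pow power_one_over)
next
  case (Suc n)
  then obtain i' where i': "i = Suc i'" "i' \<ge> n" by (metis Suc_le_D Suc_le_mono)
  show ?case unfolding i'(1) e_rec Suc.IH[OF i'(2)]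
    by (simp add: Hq_def power_add[symmetric] algebra_simps)
qed

lemma E_val: "i \<ge> n \<Longrightarrow> tabs (carlitzE n (fps_X ^ i :: 'a::{field,finite} fps)) = (1 / real CARD('a)) ^ (i - n)"
proof -
  assume i: "i \<ge> n"
  have q: "real CARD('a) \<ge> 2" using q_ge2[where 'a='a] by simp
  show ?thesis unfolding E_eq tabs_divide e_val[OF i] tabs_F
    using q by (simp add: power_add)
qed

lemma E_bnd: "\<exists>C>0. \<forall>z. tabs (carlitzE n z :: 'a::{field,finite} fls) \<le> C * tabs (fps_to_fls z)"
proof (intro exI[of _ "1 / tabs (carlitzF TYPE('a) n)"] conjI allI)
  have tF: "tabs (carlitzF TYPE('a) n) > 0" using F_nz tabs_pos by blast
  then show "1 / tabs (carlitzF TYPE('a) n) > 0" by simp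
  fix z :: "'a fps"
  have "tabs (carlitz_e n z) = tabs (fps_to_fls z - fps_to_fls 0) * (\<Prod>m\<in>Wn n - {0}. tabs (fps_to_fls z - fps_to_fls m))"
    unfolding carlitz_e_Wn tabs_prod using Wn_fin Wn_zero by (rule prod.remove)
  also have "\<dots> \<le> tabs (fps_to_fls z) * 1"
  proof (intro mult_mono)
    show "(\<Prod>m\<in>Wn n - {0}. tabs (fps_to_fls z - fps_to_fls m)) \<le> 1"
      by (rule prod_le_1) (auto simp: tabs_nonneg tabs_fps_le1 simp flip: fps_to_fls_minus)
  qed (auto simp: tabs_nonneg intro: prod_nonneg)
  finally have "tabs (carlitz_e n z) \<le> tabs (fps_to_fls z)" by simp
  then show "tabs (carlitzE n z) \<le> 1 / tabs (carlitzF TYPE('a) n) * tabs (fps_to_fls z)"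
    unfolding E_eq tabs_divide using tF by (simp add: divide_right_mono)
qed

lemma carlitz_family: "orthonormal_basis (\<lambda>n x. (carlitzE n x :: 'a::{field,finite} fls) ^ (CARD('a) ^ m))"
proof (rule power_family)
  show "fq_linear (carlitzE n :: 'a fps \<Rightarrow> 'a fls)" for n by (rule E_lin)
  show "\<exists>C>0. \<forall>z. tabs (carlitzE n z :: 'a fls) \<le> C * tabs (fps_to_fls z)" for n by (rule E_bnd)
  show "carlitzE n (fps_X ^ i :: 'a fps) = 0" if "i < n" for n i
  proof -
    have "fps_X ^ i \<in> (Wn n :: 'a fps set)" using that by (auto simp: Wn_def)
    then show ?thesis unfolding E_eq by (simp add: e_zero_factor)
  qed
  show "tabs (carlitzE n (fps_X ^ n :: 'a fps)) = 1" for n by (simp add: E_val)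
  show "tabs (carlitzE n (fps_X ^ i :: 'a fps)) \<le> 1/2" if "n < i" for n i
  proof -
    have q: "real CARD('a) \<ge> 2" using q_ge2[where 'a='a] by simp
    have "(1 / real CARD('a)) ^ (i - n) \<le> (1 / real CARD('a)) ^ 1"
      using q that by (intro power_decreasing) auto
    also have "\<dots> \<le> 1 / 2" using q by (simp add: field_simps)
    finally show ?thesis using that by (simp add: E_val)
  qed
qed


theorem corollary6:
  fixes m :: nat
  shows "orthonormal_basis (\<lambda>n x. (carlitzE n x :: 'a::{field,finite} fls) ^ (CARD('a) ^ m))
       \<and> orthonormal_basis (\<lambda>n x. (hasse n x :: 'a fls) ^ (CARD('a) ^ m))"
  using carlitz_family[of m] hasse_family[of m] by blast

end
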